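(* Fix a constant $r$. There is a constant $c_r$ such that for every unweighted $K_r$-minor-free graph $G$ and every BFS forest $F\subseteq G$, there is a root expansion of $F$ of size at most $c_r$.
   Context: $G$ is unweighted (edge lengths 1); $K_r$-minor-free means $G$ has no $K_r$ minor. For $S\subseteq V(G)$, $G[S]$ is the induced subgraph. A tree $T\subseteq G$ rooted at $r$ is a BFS tree if $\mathrm{dist}_T(r,v)=\mathrm{dist}_{G[V(T)]}(r,v)$ for all $v\in V(T)$. A BFS forest is a subgraph of $G$ that is a disjoint union of vertex-disjoint BFS trees. A BFS tree $T$ with root $r$ preserves a path $\pi$ in $G$ if every vertex of $\pi$ is in $V(T)$ and $\pi$ passes through $r$; a set of BFS trees (or forests) preserves $\pi$ if one of its trees preserves $\pi$. The prefix of a path $\pi$ is the path consisting of all but the last edge of $\pi$. A root expansion of a BFS tree $T$ is a set $\mathcal{T}$ of BFS trees such that every path $\pi$ in $G$ whose prefix is preserved by $T$ is preserved by $\mathcal{T}$. A root expansion of a BFS forest $F$ is a set $\mathcal{F}$ of BFS forests (each consisting of vertex-disjoint BFS trees; trees in different forests may share vertices) such that the set of all trees appearing in forests of $\mathcal{F}$ is a root expansion of each tree of $F$. The size of the root expansion is $|\mathcal{F}|$. *)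

theory Defs
  imports Main
begin

type_synonym 'a graph = "'a set \<times> ('a \<times> 'a) set"

definition is_graph :: "'a graph \<Rightarrow> bool" where
  "is_graph G \<longleftrightarrow> finite (fst G) \<and> snd G \<subseteq> fst G \<times> fst G \<and> sym (snd G)
     \<and> (\<forall>x. (x, x) \<notin> snd G)"

definition subgraph :: "'a graph \<Rightarrow> 'a graph \<Rightarrow> bool" where
  "subgraph H G \<longleftrightarrow> fst H \<subseteq> fst G \<and> snd H \<subseteq> snd G"

definition induced :: "'a graph \<Rightarrow> 'a set \<Rightarrow> 'a graph" where
  "induced G S = (S, snd G \<inter> (S \<times> S))"

definition walk :: "'a graph \<Rightarrow> 'a list \<Rightarrow> bool" where
  "walk G xs \<longleftrightarrow> xs \<noteq> [] \<and> set xs \<subseteq> fst G \<and> successively (\<lambda>x y. (x, y) \<in> snd G) xs"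

definition gpath :: "'a graph \<Rightarrow> 'a list \<Rightarrow> bool" where
  "gpath G xs \<longleftrightarrow> walk G xs \<and> distinct xs"

definition dist :: "'a graph \<Rightarrow> 'a \<Rightarrow> 'a \<Rightarrow> nat" where
  "dist G u v = (LEAST n. \<exists>xs. walk G xs \<and> hd xs = u \<and> last xs = v \<and> length xs = Suc n)"

definition connected_graph :: "'a graph \<Rightarrow> bool" where
  "connected_graph G \<longleftrightarrow> (\<forall>u\<in>fst G. \<forall>v\<in>fst G. \<exists>xs. walk G xs \<and> hd xs = u \<and> last xs = v)"

definition has_cycle :: "'a graph \<Rightarrow> bool" where
  "has_cycle G \<longleftrightarrow> (\<exists>xs. gpath G xs \<and> length xs \<ge> 3 \<and> (last xs, hd xs) \<in> snd G)"

definition is_tree :: "'a graph \<Rightarrow> bool" where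
  "is_tree T \<longleftrightarrow> is_graph T \<and> fst T \<noteq> {} \<and> connected_graph T \<and> \<not> has_cycle T"

definition bfs_tree :: "'a graph \<Rightarrow> 'a \<times> 'a graph \<Rightarrow> bool" where
  "bfs_tree G RT \<longleftrightarrow> (case RT of (r, T) \<Rightarrow>
     subgraph T G \<and> is_tree T \<and> r \<in> fst T \<and>
     (\<forall>v\<in>fst T. dist T r v = dist (induced G (fst T)) r v))"

definition bfs_forest :: "'a graph \<Rightarrow> ('a \<times> 'a graph) set \<Rightarrow> bool" where
  "bfs_forest G F \<longleftrightarrow> (\<forall>T\<in>F. bfs_tree G T) \<and>
     (\<forall>T1\<in>F. \<forall>T2\<in>F. T1 \<noteq> T2 \<longrightarrow> fst (snd T1) \<inter> fst (snd T2) = {})"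

definition preserves :: "'a \<times> 'a graph \<Rightarrow> 'a list \<Rightarrow> bool" where
  "preserves RT p \<longleftrightarrow> set p \<subseteq> fst (snd RT) \<and> fst RT \<in> set p"

text \<open>The prefix of a path (vertex list) drops its last edge, i.e. its last vertex.\<close>

definition root_expansion_tree ::
    "'a graph \<Rightarrow> 'a \<times> 'a graph \<Rightarrow> ('a \<times> 'a graph) set \<Rightarrow> bool" where
  "root_expansion_tree G T TS \<longleftrightarrow> (\<forall>T'\<in>TS. bfs_tree G T') \<and>
     (\<forall>p. gpath G p \<and> preserves T (butlast p) \<longrightarrow> (\<exists>T'\<in>TS. preserves T' p))"

definition root_expansion_forest ::
    "'a graph \<Rightarrow> ('a \<times> 'a graph) set \<Rightarrow> ('a \<times> 'a graph) set set \<Rightarrow> bool" where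
  "root_expansion_forest G F FS \<longleftrightarrow> (\<forall>F'\<in>FS. bfs_forest G F') \<and>
     (\<forall>T\<in>F. root_expansion_tree G T (\<Union>FS))"

definition has_K_minor :: "nat \<Rightarrow> 'a graph \<Rightarrow> bool" where
  "has_K_minor r G \<longleftrightarrow> (\<exists>B :: nat \<Rightarrow> 'a set.
     (\<forall>i<r. B i \<noteq> {} \<and> B i \<subseteq> fst G \<and> connected_graph (induced G (B i))) \<and>
     (\<forall>i<r. \<forall>j<r. i \<noteq> j \<longrightarrow> B i \<inter> B j = {}) \<and>
     (\<forall>i<r. \<forall>j<r. i \<noteq> j \<longrightarrow> (\<exists>x\<in>B i. \<exists>y\<in>B j. (x, y) \<in> snd G)))"

end

theory Submission
  imports Defs
begin



definition reach :: "'a graph \<Rightarrow> 'a \<Rightarrow> 'a \<Rightarrow> bool" where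
  "reach H u v \<longleftrightarrow> (\<exists>xs. walk H xs \<and> hd xs = u \<and> last xs = v)"

lemma walk_single[simp]: "walk H [v] \<longleftrightarrow> v \<in> fst H"
  by (simp add: walk_def)

lemma reach_refl: "v \<in> fst H \<Longrightarrow> reach H v v"
  unfolding reach_def by (rule exI[of _ "[v]"]) simp

lemma walk_append:
  assumes "walk H xs" "walk H ys" "last xs = hd ys"
  shows "walk H (xs @ tl ys)"
proof -
  obtain y ys' where ys: "ys = y # ys'" using assms(2) unfolding walk_def by (cases ys) auto
  have "successively (\<lambda>x y. (x, y) \<in> snd H) (xs @ ys')"
  proof (cases ys')
    case Nil then show ?thesis using assms unfolding walk_def by simp
  next
    case (Cons z zs)
    have "successively (\<lambda>x y. (x, y) \<in> snd H) (y # ys')" using assms(2) ys by (simp add: walk_def)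
    then have "(y, z) \<in> snd H" "successively (\<lambda>x y. (x, y) \<in> snd H) ys'" using Cons by auto
    then show ?thesis using assms ys Cons unfolding walk_def
      by (auto simp: successively_append_iff)
  qed
  then show ?thesis using assms ys unfolding walk_def by auto
qed

lemma walk_hd_last_append:
  assumes "xs \<noteq> []" "ys \<noteq> []"
  shows "hd (xs @ tl ys) = hd xs" "last xs = hd ys \<Longrightarrow> last (xs @ tl ys) = last ys"
proof -
  show "hd (xs @ tl ys) = hd xs" using assms by simp
  assume l: "last xs = hd ys"
  obtain y ys' where ys: "ys = y # ys'" using assms by (cases ys) auto
  show "last (xs @ tl ys) = last ys"
  proof (cases ys')
    case Nil then show ?thesis using ys l by simp
  next
    case (Cons z zs) then show ?thesis using ys by simp
  qed
qed

lemma reach_trans: "reach H u v \<Longrightarrow> reach H v w \<Longrightarrow> reach H u w"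
  unfolding reach_def
proof (elim exE conjE)
  fix xs ys assume a: "walk H xs" "hd xs = u" "last xs = v" "walk H ys" "hd ys = v" "last ys = w"
  then have ne: "xs \<noteq> []" "ys \<noteq> []" by (auto simp: walk_def)
  show "\<exists>zs. walk H zs \<and> hd zs = u \<and> last zs = w"
    apply (rule exI[of _ "xs @ tl ys"])
    using a ne walk_append walk_hd_last_append by metis
qed

lemma walk_rev: "sym (snd H) \<Longrightarrow> walk H xs \<Longrightarrow> walk H (rev xs)"
  unfolding walk_def
proof (elim conjE, intro conjI)
  assume s: "sym (snd H)" and w: "successively (\<lambda>x y. (x, y) \<in> snd H) xs"
  show "successively (\<lambda>x y. (x, y) \<in> snd H) (rev xs)"
    unfolding successively_rev using w by (rule successively_mono) (rule symD[OF s])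
qed auto

lemma reach_sym: "sym (snd H) \<Longrightarrow> reach H u v \<Longrightarrow> reach H v u"
  unfolding reach_def
proof (elim exE conjE)
  fix xs assume "sym (snd H)" "walk H xs" "hd xs = u" "last xs = v"
  then show "\<exists>xs. walk H xs \<and> hd xs = v \<and> last xs = u"
    by (intro exI[of _ "rev xs"]) (simp add: hd_rev last_rev walk_rev)
qed

lemma reach_edge: "(u, v) \<in> snd H \<Longrightarrow> u \<in> fst H \<Longrightarrow> v \<in> fst H \<Longrightarrow> reach H u v"
  unfolding reach_def by (rule exI[of _ "[u,v]"]) (simp add: walk_def)

lemma connected_reach: "connected_graph H \<longleftrightarrow> (\<forall>u\<in>fst H. \<forall>v\<in>fst H. reach H u v)"
  unfolding connected_graph_def reach_def by simp

lemma walk_mono: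
  assumes "walk H xs" "set xs \<subseteq> fst H'" "snd H \<subseteq> snd H'"
  shows "walk H' xs"
  using assms unfolding walk_def by (auto elim!: successively_mono)

lemma reach_mono:
  assumes "reach H u v" "fst H \<subseteq> fst H'" "snd H \<subseteq> snd H'"
  shows "reach H' u v"
proof -
  obtain xs where xs: "walk H xs" "hd xs = u" "last xs = v" using assms(1) unfolding reach_def by blast
  have "set xs \<subseteq> fst H'" using xs(1) assms(2) unfolding walk_def by blast
  then have "walk H' xs" by (rule walk_mono[OF xs(1) _ assms(3)])
  then show ?thesis using xs unfolding reach_def by blast
qed

lemma induced_simps[simp]: "fst (induced G S) = S" "snd (induced G S) = snd G \<inter> S \<times> S"
  by (auto simp: induced_def)

lemma sym_induced: "sym (snd G) \<Longrightarrow> sym (snd (induced G S))"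
  unfolding sym_def by simp

lemma reach_induced_mono:
  "reach (induced G A) u v \<Longrightarrow> A \<subseteq> B \<Longrightarrow> reach (induced G B) u v"
  by (erule reach_mono) auto

definition conn :: "'a graph \<Rightarrow> 'a set \<Rightarrow> bool" where
  "conn G A \<longleftrightarrow> connected_graph (induced G A)"

lemma conn_reach: "conn G A \<longleftrightarrow> (\<forall>u\<in>A. \<forall>v\<in>A. reach (induced G A) u v)"
  unfolding conn_def connected_reach by simp

lemma conn_single: "conn G {x}"
  unfolding conn_reach by (auto intro: reach_refl)

lemma conn_union_star:
  assumes symG: "sym (snd G)" and C: "conn G C" "c \<in> C"
    and K: "\<And>P. P \<in> K \<Longrightarrow> conn G P \<and> (\<exists>a\<in>C. \<exists>b\<in>P. (a, b) \<in> snd G)"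
  shows "conn G (C \<union> \<Union>K)"
proof -
  let ?X = "C \<union> \<Union>K"
  have sX: "sym (snd (induced G ?X))" using symG by (rule sym_induced)
  have toc: "reach (induced G ?X) u c" if uX: "u \<in> ?X" for u
  proof (cases "u \<in> C")
    case True
    then show ?thesis using C conn_reach reach_induced_mono by (metis Un_upper1)
  next
    case False
    then obtain P where P: "P \<in> K" "u \<in> P" using uX False by blast
    obtain a b where ab: "a \<in> C" "b \<in> P" "(a, b) \<in> snd G" using K[OF P(1)] by blast
    have "P \<subseteq> ?X" using P by auto
    have 1: "reach (induced G ?X) u b" using K[OF P(1)] P ab \<open>P \<subseteq> ?X\<close>
      unfolding conn_reach by (meson reach_induced_mono)
    have 2: "reach (induced G ?X) b a"
      using ab P symG by (intro reach_edge) (auto dest: symD)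
    have 3: "reach (induced G ?X) a c" using C ab unfolding conn_reach
      by (meson Un_upper1 reach_induced_mono)
    show ?thesis using 1 2 3 reach_trans by metis
  qed
  show ?thesis unfolding conn_reach
  proof (intro ballI)
    fix u v assume "u \<in> ?X" "v \<in> ?X"
    then have "reach (induced G ?X) u c" "reach (induced G ?X) c v"
      using toc reach_sym[OF sX] by auto
    then show "reach (induced G ?X) u v" by (rule reach_trans)
  qed
qed





lemma dist_le_walk:
  assumes "walk H xs" "hd xs = u" "last xs = v"
  shows "dist H u v \<le> length xs - 1"
proof -
  have "xs \<noteq> []" using assms(1) by (simp add: walk_def)
  then have "length xs = Suc (length xs - 1)" by simp
  then have "\<exists>ys. walk H ys \<and> hd ys = u \<and> last ys = v \<and> length ys = Suc (length xs - 1)"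
    using assms by blast
  then show ?thesis unfolding dist_def by (rule Least_le)
qed

lemma dist_walk_ex:
  assumes "reach H u v"
  shows "\<exists>xs. walk H xs \<and> hd xs = u \<and> last xs = v \<and> length xs = Suc (dist H u v)"
proof -
  obtain xs where xs: "walk H xs" "hd xs = u" "last xs = v" using assms unfolding reach_def by blast
  then have "xs \<noteq> []" by (simp add: walk_def)
  then have "length xs = Suc (length xs - 1)" by simp
  then have "\<exists>n xs. walk H xs \<and> hd xs = u \<and> last xs = v \<and> length xs = Suc n" using xs by blast
  then show ?thesis unfolding dist_def by (rule LeastI_ex)
qed

locale bfsctx =
  fixes G :: "'a graph" and S :: "'a set" and \<rho> :: 'a
  assumes G: "is_graph G" and SV: "S \<subseteq> fst G" and Sc: "conn G S" and rS: "\<rho> \<in> S"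
begin

abbreviation "H \<equiv> induced G S"
definition "\<delta> v = dist H \<rho> v"

lemma symG: "sym (snd G)" using G by (simp add: is_graph_def)
lemma symH: "sym (snd H)" using symG by (rule sym_induced)

lemma reachH: "v \<in> S \<Longrightarrow> reach H \<rho> v"
  using Sc rS unfolding conn_reach by blast

lemma delta_rho: "\<delta> \<rho> = 0"
proof -
  have "walk H [\<rho>]" using rS by simp
  then have "dist H \<rho> \<rho> \<le> length [\<rho>] - 1" by (rule dist_le_walk) auto
  then show ?thesis by (simp add: \<delta>_def)
qed

lemma delta_edge:
  assumes "(u, v) \<in> snd H" "u \<in> S"
  shows "\<delta> v \<le> Suc (\<delta> u)"
proof -
  obtain xs where xs: "walk H xs" "hd xs = \<rho>" "last xs = u" "length xs = Suc (\<delta> u)"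
    using dist_walk_ex[OF reachH[OF assms(2)]] unfolding \<delta>_def by blast
  have "v \<in> S" using assms(1) by auto
  then have w: "walk H [u, v]" using assms by (simp add: walk_def)
  have "walk H (xs @ tl [u, v])" using walk_append[OF xs(1) w] xs(3) by simp
  moreover have "xs \<noteq> []" using xs(1) by (simp add: walk_def)
  ultimately have "dist H \<rho> v \<le> length (xs @ [v]) - 1"
    using xs by (intro dist_le_walk) auto
  then show ?thesis using xs(4) by (simp add: \<delta>_def)
qed

lemma delta_pred:
  assumes "v \<in> S" "v \<noteq> \<rho>"
  shows "\<exists>u. (u, v) \<in> snd H \<and> Suc (\<delta> u) = \<delta> v"
proof -
  obtain xs where xs: "walk H xs" "hd xs = \<rho>" "last xs = v" "length xs = Suc (\<delta> v)"
    using dist_walk_ex[OF reachH[OF assms(1)]] unfolding \<delta>_def by blast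
  have "xs \<noteq> []" using xs(1) by (simp add: walk_def)
  have "length xs \<noteq> 1"
  proof
    assume "length xs = 1"
    then obtain a where "xs = [a]" by (cases xs) auto
    then show False using xs assms by simp
  qed
  then have "butlast xs \<noteq> []" using \<open>xs \<noteq> []\<close> by (cases xs) auto
  define u where "u = last (butlast xs)"
  have xs_eq: "xs = butlast xs @ [v]" using append_butlast_last_id[OF \<open>xs \<noteq> []\<close>] xs(3) by simp
  have succ: "successively (\<lambda>x y. (x, y) \<in> snd H) (butlast xs @ [v])"
    using xs(1) xs_eq unfolding walk_def by metis
  then have e: "(u, v) \<in> snd H" using \<open>butlast xs \<noteq> []\<close>
    unfolding u_def by (simp add: successively_append_iff)
  have wb: "walk H (butlast xs)" using xs(1) \<open>butlast xs \<noteq> []\<close> succ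
    unfolding walk_def by (auto simp: successively_append_iff dest: in_set_butlastD)
  have "hd (butlast xs) = \<rho>" using xs(2) \<open>butlast xs \<noteq> []\<close> xs_eq by (metis hd_append2)
  then have "dist H \<rho> u \<le> length (butlast xs) - 1" using dist_le_walk[OF wb _ u_def[symmetric]] by blast
  moreover have "length (butlast xs) > 0" using \<open>butlast xs \<noteq> []\<close> by blast
  ultimately have "Suc (\<delta> u) \<le> \<delta> v" using xs(4) by (simp add: \<delta>_def)
  moreover have "u \<in> S" using e by auto
  then have "\<delta> v \<le> Suc (\<delta> u)" using e delta_edge by blast
  ultimately show ?thesis using e by (intro exI[of _ u]) simp
qed

definition "par v = (SOME u. (u, v) \<in> snd H \<and> Suc (\<delta> u) = \<delta> v)"

lemma par:
  assumes "v \<in> S" "v \<noteq> \<rho>"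
  shows "(par v, v) \<in> snd G" "par v \<in> S" "Suc (\<delta> (par v)) = \<delta> v"
proof -
  have "(par v, v) \<in> snd H \<and> Suc (\<delta> (par v)) = \<delta> v"
    unfolding par_def using delta_pred[OF assms] by (rule someI_ex)
  then show "(par v, v) \<in> snd G" "par v \<in> S" "Suc (\<delta> (par v)) = \<delta> v" by auto
qed

definition "PE = (\<lambda>v. (par v, v)) ` (S - {\<rho>})"
definition "ET = PE \<union> PE\<inverse>"
definition "T = (S, ET)"

lemma ET_mem: "(a, b) \<in> ET \<longleftrightarrow> (\<exists>v. v \<in> S \<and> v \<noteq> \<rho> \<and> ((a, b) = (par v, v) \<or> (a, b) = (v, par v)))"
  unfolding ET_def PE_def by auto

lemma ET_sub: "ET \<subseteq> snd H"
proof
  fix e assume e: "e \<in> ET"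
  obtain a b where ab: "e = (a, b)" by (cases e)
  then obtain v where v: "v \<in> S" "v \<noteq> \<rho>" "(a, b) = (par v, v) \<or> (a, b) = (v, par v)"
    using e ET_mem by blast
  have "(v, par v) \<in> snd G" using symG par(1)[OF v(1,2)] by (rule symD)
  then show "e \<in> snd H" using v par[OF v(1,2)] ab by auto
qed

lemma ET_key:
  assumes "(v, w) \<in> ET" "\<delta> w \<le> \<delta> v"
  shows "v \<in> S" "v \<noteq> \<rho>" "w = par v"
proof -
  obtain x where x: "x \<in> S" "x \<noteq> \<rho>" "(v, w) = (par x, x) \<or> (v, w) = (x, par x)"
    using assms(1) ET_mem by blast
  have "(v, w) = (x, par x)"
  proof (rule ccontr)
    assume "(v, w) \<noteq> (x, par x)"
    then have "v = par x" "w = x" using x by auto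
    then show False using par(3)[OF x(1,2)] assms(2) by simp
  qed
  then show "v \<in> S" "v \<noteq> \<rho>" "w = par v" using x by auto
qed

lemma sym_ET: "sym ET"
  unfolding ET_def by (rule sym_Un_converse)

lemma walk_T_H: "walk T xs \<Longrightarrow> walk H xs"
proof -
  assume w: "walk T xs"
  then have "set xs \<subseteq> fst H" by (simp add: walk_def T_def)
  moreover have "snd T \<subseteq> snd H" using ET_sub by (simp add: T_def)
  ultimately show ?thesis by (rule walk_mono[OF w])
qed

lemma walk_T_ex: "v \<in> S \<Longrightarrow> \<exists>xs. walk T xs \<and> hd xs = \<rho> \<and> last xs = v \<and> length xs = Suc (\<delta> v)"
proof (induction "\<delta> v" arbitrary: v)
  case 0
  have "v = \<rho>"
  proof (rule ccontr)
    assume "v \<noteq> \<rho>" then show False using par(3)[OF 0(2)] 0(1) by simp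
  qed
  then show ?case using 0 rS by (intro exI[of _ "[\<rho>]"]) (simp add: T_def)
next
  case (Suc n)
  have "v \<noteq> \<rho>" using Suc(2) delta_rho by auto
  note p = par[OF Suc(3) this]
  obtain xs where xs: "walk T xs" "hd xs = \<rho>" "last xs = par v" "length xs = Suc (\<delta> (par v))"
    using Suc(1)[of "par v"] p Suc(2) by auto
  have e: "(par v, v) \<in> ET" using Suc(3) \<open>v \<noteq> \<rho>\<close> ET_mem by blast
  have w: "walk T [par v, v]" using e p Suc(3) by (simp add: walk_def T_def)
  have "walk T (xs @ tl [par v, v])" using walk_append[OF xs(1) w] xs(3) by simp
  moreover have "xs \<noteq> []" using xs(1) by (simp add: walk_def)
  ultimately show ?case using xs p by (intro exI[of _ "xs @ [v]"]) auto
qed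

lemma dist_T: "v \<in> S \<Longrightarrow> dist T \<rho> v = \<delta> v"
proof -
  assume v: "v \<in> S"
  show ?thesis unfolding dist_def
  proof (rule Least_equality)
    show "\<exists>xs. walk T xs \<and> hd xs = \<rho> \<and> last xs = v \<and> length xs = Suc (\<delta> v)"
      using walk_T_ex[OF v] .
  next
    fix m assume "\<exists>xs. walk T xs \<and> hd xs = \<rho> \<and> last xs = v \<and> length xs = Suc m"
    then obtain xs where xs: "walk T xs" "hd xs = \<rho>" "last xs = v" "length xs = Suc m" by blast
    have "dist H \<rho> v \<le> length xs - 1" using walk_T_H[OF xs(1)] xs(2,3) by (rule dist_le_walk)
    then show "\<delta> v \<le> m" using xs(4) by (simp add: \<delta>_def)
  qed
qed

lemma T_graph: "is_graph T"
proof -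
  have "finite S" using G SV finite_subset unfolding is_graph_def by blast
  moreover have "ET \<subseteq> S \<times> S" using ET_sub by auto
  moreover have "(x, x) \<notin> ET" for x
  proof
    assume "(x, x) \<in> ET"
    then have "x = par x" "x \<in> S" "x \<noteq> \<rho>" using ET_key by auto
    then show False using par(3)[of x] by simp
  qed
  ultimately show ?thesis using sym_ET unfolding is_graph_def T_def by auto
qed

lemma T_conn: "connected_graph T"
proof -
  have r: "reach T \<rho> v" if "v \<in> S" for v
    using walk_T_ex[OF that] unfolding reach_def by blast
  have sT: "sym (snd T)" using sym_ET by (simp add: T_def)
  show ?thesis unfolding connected_reach
  proof (intro ballI)
    fix u v assume "u \<in> fst T" "v \<in> fst T"
    then have "reach T u \<rho>" "reach T \<rho> v" using r reach_sym[OF sT] by (auto simp: T_def)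
    then show "reach T u v" by (rule reach_trans)
  qed
qed

lemma T_acyclic: "\<not> has_cycle T"
proof
  assume "has_cycle T"
  then obtain xs where gp: "gpath T xs" and len: "length xs \<ge> 3" and cl: "(last xs, hd xs) \<in> ET"
    unfolding has_cycle_def T_def by auto
  define n where "n = length xs"
  have dist: "distinct xs" and w: "walk T xs" using gp by (auto simp: gpath_def)
  have ne: "xs \<noteq> []" using len by auto
  define nx where "nx j = (if Suc j < n then Suc j else 0)" for j
  have edge: "(xs ! j, xs ! nx j) \<in> ET" if "j < n" for j
  proof (cases "Suc j < n")
    case True
    then have "(xs ! j, xs ! Suc j) \<in> snd T" using w unfolding walk_def n_def
      by (auto intro: successively_nth)
    then show ?thesis using True by (simp add: nx_def T_def)
  next
    case False
    then have "j = n - 1" using that by simp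
    then have "xs ! j = last xs" "xs ! nx j = hd xs" using ne False
      by (auto simp: nx_def n_def last_conv_nth hd_conv_nth)
    then show ?thesis using cl by simp
  qed
  define m where "m = Max (\<delta> ` set xs)"
  have "m \<in> \<delta> ` set xs" unfolding m_def using ne by (intro Max_in) auto
  then obtain i where i: "i < n" "\<delta> (xs ! i) = m" unfolding n_def by (auto simp: in_set_conv_nth)
  have mx: "\<delta> (xs ! j) \<le> m" if "j < n" for j
    unfolding m_def using that n_def by (intro Max_ge) auto
  define pv where "pv = (if i = 0 then n - 1 else i - 1)"
  have pv: "pv < n" "nx pv = i" using i len unfolding pv_def nx_def n_def by auto
  have nxi: "nx i < n" unfolding nx_def using i len n_def by auto
  have e1: "(xs ! i, xs ! pv) \<in> ET" using edge[OF pv(1)] pv(2) sym_ET by (auto dest: symD)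
  have e2: "(xs ! i, xs ! nx i) \<in> ET" using edge[OF i(1)] .
  have "xs ! pv = par (xs ! i)" using ET_key(3)[OF e1] mx[OF pv(1)] i(2) by simp
  moreover have "xs ! nx i = par (xs ! i)" using ET_key(3)[OF e2] mx[OF nxi] i(2) by simp
  ultimately have "xs ! pv = xs ! nx i" by simp
  then have "pv = nx i" using dist pv(1) nxi unfolding n_def by (simp add: nth_eq_iff_index_eq)
  then show False using i len unfolding pv_def nx_def n_def by (auto split: if_splits)
qed

lemma T_bfs: "bfs_tree G (\<rho>, T)"
  unfolding bfs_tree_def
proof (simp, intro conjI ballI)
  show "subgraph T G" using SV ET_sub unfolding subgraph_def T_def by auto
  show "is_tree T" unfolding is_tree_def using T_graph T_conn T_acyclic rS by (auto simp: T_def)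
  show "\<rho> \<in> fst T" using rS by (simp add: T_def)
  fix v assume "v \<in> fst T"
  then show "dist T \<rho> v = dist (induced G (fst T)) \<rho> v" using dist_T by (simp add: T_def \<delta>_def)
qed

end

lemma bfs_exists:
  assumes "is_graph G" "S \<subseteq> fst G" "conn G S" "\<rho> \<in> S"
  shows "\<exists>T. bfs_tree G (\<rho>, T) \<and> fst T = S"
proof -
  interpret bfsctx G S \<rho> using assms by unfold_locales
  show ?thesis using T_bfs by (intro exI[of _ T]) (simp add: T_def)
qed





definition adjs :: "'a graph \<Rightarrow> 'a set \<Rightarrow> 'a set \<Rightarrow> bool" where
  "adjs G A B \<longleftrightarrow> (\<exists>a\<in>A. \<exists>b\<in>B. (a, b) \<in> snd G)"

definition model :: "'a graph \<Rightarrow> 'a set set \<Rightarrow> bool" where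
  "model G M \<longleftrightarrow> (\<forall>A\<in>M. A \<noteq> {} \<and> A \<subseteq> fst G \<and> conn G A) \<and>
     (\<forall>A\<in>M. \<forall>B\<in>M. A \<noteq> B \<longrightarrow> A \<inter> B = {})"

definition medges :: "'a graph \<Rightarrow> 'a set set \<Rightarrow> ('a set \<times> 'a set) set \<Rightarrow> bool" where
  "medges G M E \<longleftrightarrow> E \<subseteq> M \<times> M \<and> sym E \<and> (\<forall>A B. (A, B) \<in> E \<longrightarrow> A \<noteq> B \<and> adjs G A B)"

definition nb :: "('b \<times> 'b) set \<Rightarrow> 'b \<Rightarrow> 'b set" where
  "nb E A = {B. (A, B) \<in> E}"

definition sat :: "'a set set \<Rightarrow> 'a set \<Rightarrow> bool" where
  "sat M0 X \<longleftrightarrow> X = \<Union>{B\<in>M0. B \<subseteq> X}"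

lemma sat_member: "A \<in> M0 \<Longrightarrow> sat M0 A"
  unfolding sat_def by blast

lemma sat_Un: "sat M0 A \<Longrightarrow> sat M0 B \<Longrightarrow> sat M0 (A \<union> B)"
  unfolding sat_def by blast

lemma sat_trans:
  assumes "sat N X" "N \<subseteq> M" "\<forall>A\<in>M. sat M0 A"
  shows "sat M0 X"
  unfolding sat_def
proof
  show "\<Union>{B \<in> M0. B \<subseteq> X} \<subseteq> X" by blast
  show "X \<subseteq> \<Union>{B \<in> M0. B \<subseteq> X}"
  proof
    fix a assume "a \<in> X"
    then obtain A where A: "A \<in> N" "A \<subseteq> X" "a \<in> A" using assms(1) unfolding sat_def by blast
    then have "sat M0 A" using assms(2,3) by blast
    then obtain B where "B \<in> M0" "B \<subseteq> A" "a \<in> B" using A(3) unfolding sat_def by blast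
    then show "a \<in> \<Union>{B \<in> M0. B \<subseteq> X}" using A(2) by blast
  qed
qed

lemma sat_sub: "sat N X \<Longrightarrow> X \<subseteq> \<Union>N"
  unfolding sat_def by blast

lemma sat_ne: "sat N X \<Longrightarrow> X \<noteq> {} \<Longrightarrow> \<exists>A\<in>N. A \<subseteq> X \<and> A \<noteq> {}"
  unfolding sat_def by blast

definition Kfam :: "nat \<Rightarrow> 'a graph \<Rightarrow> 'a set set \<Rightarrow> bool" where
  "Kfam r G M0 \<longleftrightarrow> (\<exists>B :: nat \<Rightarrow> 'a set.
     (\<forall>i<r. B i \<noteq> {} \<and> sat M0 (B i) \<and> conn G (B i)) \<and>
     (\<forall>i<r. \<forall>j<r. i \<noteq> j \<longrightarrow> B i \<inter> B j = {}) \<and>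
     (\<forall>i<r. \<forall>j<r. i \<noteq> j \<longrightarrow> adjs G (B i) (B j)))"

lemma model_sub: "model G M \<Longrightarrow> N \<subseteq> M \<Longrightarrow> model G N"
  unfolding model_def by blast

lemma model_finite: "is_graph G \<Longrightarrow> model G M \<Longrightarrow> finite M"
proof -
  assume "is_graph G" "model G M"
  then have "M \<subseteq> Pow (fst G)" "finite (fst G)" unfolding model_def is_graph_def by auto
  then show "finite M" by (meson finite_Pow_iff finite_subset)
qed

lemma card_E_sum:
  assumes "E \<subseteq> M \<times> M" "finite M"
  shows "card E = (\<Sum>A\<in>M. card (nb E A))"
proof -
  have "E = Sigma M (nb E)" using assms(1) unfolding nb_def by auto
  moreover have "finite (nb E A)" if "A \<in> M" for A
  proof (rule finite_subset[OF _ assms(2)])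
    show "nb E A \<subseteq> M" using assms(1) unfolding nb_def by blast
  qed
  ultimately show ?thesis using card_SigmaI[OF assms(2), of "nb E"] by simp
qed





lemma adjs_mono: "adjs G A B \<Longrightarrow> A \<subseteq> A' \<Longrightarrow> B \<subseteq> B' \<Longrightarrow> adjs G A' B'"
  unfolding adjs_def by blast

lemma card_pairs_le:
  assumes "finite M" "E \<subseteq> M \<times> M"
  shows "card {e\<in>E. fst e \<in> {x, z}} \<le> card (nb E x) + card (nb E z)"
proof -
  have fin: "finite (nb E y)" for y
    by (rule finite_subset[OF _ assms(1)]) (use assms(2) in \<open>auto simp: nb_def\<close>)
  have "{e\<in>E. fst e \<in> {x, z}} \<subseteq> ({x} \<times> nb E x) \<union> ({z} \<times> nb E z)" by (auto simp: nb_def)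
  then have "card {e\<in>E. fst e \<in> {x, z}} \<le> card (({x} \<times> nb E x) \<union> ({z} \<times> nb E z))"
    using fin by (intro card_mono) auto
  also have "\<dots> \<le> card ({x} \<times> nb E x) + card ({z} \<times> nb E z)" by (rule card_Un_le)
  also have "\<dots> = card (nb E x) + card (nb E z)" by (simp add: card_cartesian_product)
  finally show ?thesis .
qed

lemma contract:
  assumes G: "is_graph G" and mo: "model G M" and me: "medges G M E" and xz: "(x, z) \<in> E"
  defines "R \<equiv> M - {x, z}" and "m \<equiv> x \<union> z"
  defines "U \<equiv> (nb E x \<union> nb E z) \<inter> R"
  defines "M' \<equiv> insert m R"
  defines "E' \<equiv> (E \<inter> R \<times> R) \<union> (\<lambda>w. (m, w)) ` U \<union> (\<lambda>w. (w, m)) ` U"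
  shows "model G M'" "medges G M' E'" "card M' < card M"
    "card E \<le> card E' + 2 * card (nb E x \<inter> nb E z) + 4"
proof -
  have finM: "finite M" using G mo by (rule model_finite)
  have EM: "E \<subseteq> M \<times> M" and symE: "sym E" and irr: "\<And>A B. (A, B) \<in> E \<Longrightarrow> A \<noteq> B \<and> adjs G A B"
    using me unfolding medges_def by auto
  have xM: "x \<in> M" and zM: "z \<in> M" using xz EM by auto
  have xzne: "x \<noteq> z" "adjs G x z" using irr[OF xz] by auto
  have mem: "\<And>A. A \<in> M \<Longrightarrow> A \<noteq> {} \<and> A \<subseteq> fst G \<and> conn G A"
    and disj: "\<And>A B. A \<in> M \<Longrightarrow> B \<in> M \<Longrightarrow> A \<noteq> B \<Longrightarrow> A \<inter> B = {}"
    using mo unfolding model_def by auto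
  have symG: "sym (snd G)" using G by (simp add: is_graph_def)
  have mR: "m \<notin> R"
  proof
    assume "m \<in> R"
    then have "m \<in> M" "m \<noteq> x" unfolding R_def by auto
    then have "m \<inter> x = {}" using disj xM by blast
    then show False using mem[OF xM] unfolding m_def by blast
  qed
  have RM: "R \<subseteq> M" unfolding R_def by blast
  have cardR: "card R = card M - 2"
  proof -
    have "card R = card M - card {x, z}" unfolding R_def using xM zM finM
      by (intro card_Diff_subset) auto
    then show ?thesis using xzne by simp
  qed
  have "card M \<ge> 2"
  proof -
    have "card {x, z} \<le> card M" using xM zM finM by (intro card_mono) auto
    then show ?thesis using xzne by simp
  qed
  then show "card M' < card M" unfolding M'_def using mR cardR finM RM
    by (simp add: finite_subset)
  have m_conn: "conn G m"
  proof -
    obtain a where "a \<in> x" using mem[OF xM] by blast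
    have "conn G (x \<union> \<Union>{z})"
      using symG mem[OF xM] \<open>a \<in> x\<close> mem[OF zM] xzne(2) unfolding adjs_def
      by (intro conn_union_star) auto
    then show ?thesis unfolding m_def by simp
  qed
  have wm: "w \<inter> m = {}" if "w \<in> R" for w
    using that disj[OF _ xM] disj[OF _ zM] unfolding R_def m_def by blast
  have mod1: "A \<noteq> {} \<and> A \<subseteq> fst G \<and> conn G A" if "A \<in> M'" for A
    using that mem xM zM m_conn RM unfolding M'_def m_def by auto
  have mod2: "A \<inter> B = {}" if A: "A \<in> M'" and B: "B \<in> M'" and AB: "A \<noteq> B" for A B
  proof (cases "A = m")
    case True then show ?thesis using B AB wm unfolding M'_def by blast
  next
    case False
    show ?thesis
    proof (cases "B = m")
      case True then show ?thesis using A AB wm unfolding M'_def by blast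
    next
      case False
      then show ?thesis using A B AB \<open>A \<noteq> m\<close> disj RM unfolding M'_def by blast
    qed
  qed
  show "model G M'" unfolding model_def using mod1 mod2 by blast
  have UR: "U \<subseteq> R" unfolding U_def by blast
  have Uadj: "adjs G m w \<and> adjs G w m" if "w \<in> U" for w
  proof -
    have "(x, w) \<in> E \<or> (z, w) \<in> E" using that unfolding U_def nb_def by blast
    then have "adjs G x w \<or> adjs G z w" using irr by blast
    moreover have "adjs G w x" if "adjs G x w" using that symG unfolding adjs_def by (meson symD)
    moreover have "adjs G w z" if "adjs G z w" using that symG unfolding adjs_def by (meson symD)
    ultimately show ?thesis unfolding m_def by (meson Un_upper1 Un_upper2 adjs_mono order_refl)
  qed
  have me1: "E' \<subseteq> M' \<times> M'" unfolding E'_def M'_def using UR by auto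
  have me2: "sym E'" unfolding sym_def
  proof (intro allI impI)
    fix a b assume "(a, b) \<in> E'"
    then show "(b, a) \<in> E'" unfolding E'_def using symE by (auto dest: symD)
  qed
  have me3: "A \<noteq> B \<and> adjs G A B" if AB: "(A, B) \<in> E'" for A B
  proof -
    consider "(A, B) \<in> E" "A \<in> R" "B \<in> R" | "A = m" "B \<in> U" | "B = m" "A \<in> U"
      using AB unfolding E'_def by blast
    then show "A \<noteq> B \<and> adjs G A B"
    proof cases
      case 1 then show ?thesis using irr by blast
    next
      case 2 then show ?thesis using Uadj UR mR by blast
    next
      case 3 then show ?thesis using Uadj UR mR by blast
    qed
  qed
  show "medges G M' E'" unfolding medges_def using me1 me2 me3 by blast
  have finE: "finite E" using EM finM by (meson finite_SigmaI finite_subset)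
  have finU: "finite U" using UR RM finM by (meson finite_subset)
  have fin_nb: "finite (nb E y)" for y
    by (rule finite_subset[OF _ finM]) (use EM in \<open>auto simp: nb_def\<close>)
  define ER where "ER = E \<inter> R \<times> R"
  have finER: "finite ER" using finE unfolding ER_def by simp
  have cE': "card E' = card ER + card U + card U"
  proof -
    have d1: "ER \<inter> (\<lambda>w. (m, w)) ` U = {}" using mR unfolding ER_def by auto
    have d2: "(ER \<union> (\<lambda>w. (m, w)) ` U) \<inter> (\<lambda>w. (w, m)) ` U = {}" using mR UR unfolding ER_def by auto
    have i1: "card ((\<lambda>w. (m, w)) ` U) = card U" by (rule card_image) (auto simp: inj_on_def)
    have i2: "card ((\<lambda>w. (w, m)) ` U) = card U" by (rule card_image) (auto simp: inj_on_def)
    have "card E' = card (ER \<union> (\<lambda>w. (m, w)) ` U) + card ((\<lambda>w. (w, m)) ` U)"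
      unfolding E'_def ER_def[symmetric] using d2 finER finU by (intro card_Un_disjoint) auto
    also have "card (ER \<union> (\<lambda>w. (m, w)) ` U) = card ER + card U"
      using d1 finER finU i1 by (subst card_Un_disjoint) auto
    finally show ?thesis using i2 by simp
  qed
  have "E \<subseteq> ER \<union> {e\<in>E. fst e \<in> {x, z}} \<union> {e\<in>E. snd e \<in> {x, z}}"
    unfolding ER_def R_def using EM by auto
  then have "card E \<le> card (ER \<union> {e\<in>E. fst e \<in> {x, z}} \<union> {e\<in>E. snd e \<in> {x, z}})"
    using finE finER by (intro card_mono) auto
  also have "\<dots> \<le> card ER + card {e\<in>E. fst e \<in> {x, z}} + card {e\<in>E. snd e \<in> {x, z}}"
    by (meson add_le_mono card_Un_le le_refl order_trans)
  also have "card {e\<in>E. snd e \<in> {x, z}} = card {e\<in>E. fst e \<in> {x, z}}"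
  proof -
    have "{e\<in>E. snd e \<in> {x, z}} = prod.swap ` {e\<in>E. fst e \<in> {x, z}}"
      using symE by (force dest: symD)
    then show ?thesis by (simp add: card_image)
  qed
  also have "card {e\<in>E. fst e \<in> {x, z}} \<le> card (nb E x) + card (nb E z)"
    by (rule card_pairs_le[OF finM EM])
  finally have c1: "card E \<le> card ER + 2 * (card (nb E x) + card (nb E z))" by simp
  have "nb E x \<union> nb E z \<subseteq> U \<union> {x, z}" unfolding U_def R_def nb_def using EM by auto
  then have "card (nb E x \<union> nb E z) \<le> card (U \<union> {x, z})" using finU by (intro card_mono) auto
  also have "\<dots> \<le> card U + 2" using card_Un_le[of U "{x,z}"] xzne(1) by simp
  finally have c2: "card (nb E x \<union> nb E z) \<le> card U + 2" .
  have c3: "card (nb E x) + card (nb E z) = card (nb E x \<union> nb E z) + card (nb E x \<inter> nb E z)"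
    using fin_nb[of x] fin_nb[of z] by (rule card_Un_Int)
  show "card E \<le> card E' + 2 * card (nb E x \<inter> nb E z) + 4"
    using c1 c2 c3 cE' by arith
qed





lemma mader:
  assumes G: "is_graph G"
  shows "model G M \<Longrightarrow> medges G M E \<Longrightarrow> M \<noteq> {} \<Longrightarrow> 2 * 4 ^ r * card M \<le> card E \<Longrightarrow> Kfam r G M"
proof (induction r arbitrary: M E)
  case 0
  show ?case unfolding Kfam_def by (intro exI[of _ "\<lambda>i. {}"]) simp
next
  case (Suc r)
  define k :: nat where "k = 4 ^ r"
  have k1: "k \<ge> 1" unfolding k_def by simp
  define D :: nat where "D = 8 * k"
  have DD: "2 * 4 ^ Suc r = D" unfolding D_def k_def by simp
  define P where "P = (\<lambda>ME :: 'a set set \<times> ('a set \<times> 'a set) set.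
     model G (fst ME) \<and> medges G (fst ME) (snd ME) \<and> fst ME \<noteq> {} \<and>
     D * card (fst ME) \<le> card (snd ME) \<and> (\<forall>A\<in>fst ME. sat M A))"
  have "P (M, E)" unfolding P_def using Suc.prems DD sat_member by auto
  then obtain ME1 where ME1: "P ME1" and minim: "\<And>ME'. P ME' \<Longrightarrow> card (fst ME1) \<le> card (fst ME')"
    using ex_has_least_nat[of P "(M, E)" "\<lambda>ME. card (fst ME)"] by blast
  obtain M1 E1 where ME1eq: "ME1 = (M1, E1)" by (cases ME1)
  have mo1: "model G M1" and me1: "medges G M1 E1" and ne1: "M1 \<noteq> {}"
    and dens1: "D * card M1 \<le> card E1" and sat1: "\<forall>A\<in>M1. sat M A"
    using ME1 unfolding P_def ME1eq by auto
  have finM1: "finite M1" using G mo1 by (rule model_finite)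
  have E1M: "E1 \<subseteq> M1 \<times> M1" and symE1: "sym E1"
    and irr1: "\<And>A B. (A, B) \<in> E1 \<Longrightarrow> A \<noteq> B \<and> adjs G A B"
    using me1 unfolding medges_def by auto
  have "card M1 \<ge> 1" using finM1 ne1 by (simp add: Suc_leI card_gt_0_iff)
  then have "D \<le> D * card M1" by simp
  moreover have "D \<ge> 1" using k1 unfolding D_def by simp
  ultimately have "card E1 > 0" using dens1 by linarith
  then have "E1 \<noteq> {}" by auto
  then obtain x y0 where xy0: "(x, y0) \<in> E1" by auto
  define N where "N = nb E1 x"
  have xM1: "x \<in> M1" using xy0 E1M by auto
  have NM1: "N \<subseteq> M1" unfolding N_def nb_def using E1M by auto
  have y0N: "y0 \<in> N" unfolding N_def nb_def using xy0 by simp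
  have xN: "x \<notin> N" unfolding N_def nb_def using irr1 by blast
  \<comment> \<open>common neighbours via contraction\<close>
  have common: "2 * k \<le> card (nb E1 z \<inter> N)" if zN: "z \<in> N" for z
  proof -
    have xz: "(x, z) \<in> E1" using zN unfolding N_def nb_def by simp
    define R where "R = M1 - {x, z}"
    define m where "m = x \<union> z"
    define U where "U = (nb E1 x \<union> nb E1 z) \<inter> R"
    define M' where "M' = insert m R"
    define E' where "E' = (E1 \<inter> R \<times> R) \<union> (\<lambda>w. (m, w)) ` U \<union> (\<lambda>w. (w, m)) ` U"
    note c = contract[OF G mo1 me1 xz, folded R_def m_def, folded U_def, folded M'_def E'_def]
    have zM1: "z \<in> M1" using zN NM1 by auto
    have satM': "\<forall>A\<in>M'. sat M A"
    proof -
      have "sat M (x \<union> z)" using sat1 xM1 zM1 by (intro sat_Un) auto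
      then show ?thesis using sat1 unfolding M'_def R_def m_def by auto
    qed
    have "\<not> (D * card M' \<le> card E')"
    proof
      assume "D * card M' \<le> card E'"
      then have "P (M', E')" unfolding P_def using c(1,2) satM' by (simp add: M'_def)
      then have "card M1 \<le> card M'" using minim ME1eq by fastforce
      then show False using c(3) by simp
    qed
    then have lt: "card E' < D * card M'" by simp
    have "Suc (card M') \<le> card M1" using c(3) by simp
    then have "D * Suc (card M') \<le> D * card M1" by (rule mult_le_mono2)
    then have "D * card M' + D \<le> D * card M1" by simp
    then have "D < 2 * card (nb E1 x \<inter> nb E1 z) + 4" using lt c(4) dens1 by linarith
    moreover have "nb E1 z \<inter> N = nb E1 x \<inter> nb E1 z" unfolding N_def by blast
    then have "card (nb E1 z \<inter> N) = card (nb E1 x \<inter> nb E1 z)" by simp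
    ultimately show ?thesis unfolding D_def using k1 by linarith
  qed
  define EN where "EN = E1 \<inter> N \<times> N"
  have moN: "model G N" using mo1 NM1 by (rule model_sub)
  have meN: "medges G N EN" unfolding medges_def EN_def
  proof (intro conjI)
    show "sym (E1 \<inter> N \<times> N)" using symE1 unfolding sym_def by blast
    show "\<forall>A B. (A, B) \<in> E1 \<inter> N \<times> N \<longrightarrow> A \<noteq> B \<and> adjs G A B" using irr1 by blast
  qed blast
  have finN: "finite N" using NM1 finM1 by (rule finite_subset)
  have "card EN = (\<Sum>z\<in>N. card (nb EN z))"
    using card_E_sum[of EN N] finN unfolding EN_def by blast
  also have "\<dots> \<ge> card N * (2 * k)"
  proof (rule sum_bounded_below[where 'a=nat, simplified])
    fix z assume "z \<in> N"
    moreover have "nb EN z = nb E1 z \<inter> N" using \<open>z \<in> N\<close> unfolding EN_def nb_def by blast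
    ultimately show "2 * k \<le> card (nb EN z)" using common by simp
  qed
  finally have densN: "2 * 4 ^ r * card N \<le> card EN" unfolding k_def by (simp add: mult.commute)
  have "N \<noteq> {}" using y0N by blast
  then have "Kfam r G N" using Suc.IH moN meN densN by blast
  then obtain B where B1: "\<forall>i<r. B i \<noteq> {} \<and> sat N (B i) \<and> conn G (B i)"
    and B2: "\<forall>i<r. \<forall>j<r. i \<noteq> j \<longrightarrow> B i \<inter> B j = {}"
    and B3: "\<forall>i<r. \<forall>j<r. i \<noteq> j \<longrightarrow> adjs G (B i) (B j)"
    unfolding Kfam_def by blast
  define B' where "B' = B(r := x)"
  have xprops: "x \<noteq> {}" "conn G x" "sat M x" using mo1 xM1 sat1 unfolding model_def by auto
  have Bsat: "sat M (B i)" if "i < r" for i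
  proof -
    have "sat N (B i)" using B1 that by blast
    then show ?thesis using NM1 sat1 by (rule sat_trans)
  qed
  have Bdisj: "B i \<inter> x = {}" if "i < r" for i
  proof -
    have "sat N (B i)" using B1 that by blast
    then have "B i \<subseteq> \<Union>N" by (rule sat_sub)
    moreover have "A \<inter> x = {}" if AN: "A \<in> N" for A
    proof -
      have "A \<in> M1" "A \<noteq> x" using AN NM1 xN by auto
      then show ?thesis using mo1 xM1 unfolding model_def by blast
    qed
    ultimately show ?thesis by blast
  qed
  have Badj: "adjs G x (B i) \<and> adjs G (B i) x" if "i < r" for i
  proof -
    have "sat N (B i)" "B i \<noteq> {}" using B1 that by auto
    then obtain A where A: "A \<in> N" "A \<subseteq> B i" using sat_ne by blast
    have "(x, A) \<in> E1" "(A, x) \<in> E1" using A(1) symE1 unfolding N_def nb_def by (auto dest: symD)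
    then have "adjs G x A" "adjs G A x" using irr1 by auto
    then show ?thesis using A(2) adjs_mono by blast
  qed
  have K1: "B' i \<noteq> {} \<and> sat M (B' i) \<and> conn G (B' i)" if "i < Suc r" for i
    using that B1 Bsat xprops unfolding B'_def by (cases "i = r") auto
  have K2: "B' i \<inter> B' j = {}" if "i < Suc r" "j < Suc r" "i \<noteq> j" for i j
    using that B2 Bdisj unfolding B'_def
    by (cases "i = r"; cases "j = r") (auto simp: Int_commute)
  have K3: "adjs G (B' i) (B' j)" if "i < Suc r" "j < Suc r" "i \<noteq> j" for i j
    using that B3 Badj unfolding B'_def by (cases "i = r"; cases "j = r") auto
  show ?case unfolding Kfam_def using K1 K2 K3 by blast
qed





lemma Kfam_minor:
  assumes "model G M" "Kfam r G M"
  shows "has_K_minor r G"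
proof -
  obtain B where B1: "\<forall>i<r. B i \<noteq> {} \<and> sat M (B i) \<and> conn G (B i)"
    and B2: "\<forall>i<r. \<forall>j<r. i \<noteq> j \<longrightarrow> B i \<inter> B j = {}"
    and B3: "\<forall>i<r. \<forall>j<r. i \<noteq> j \<longrightarrow> adjs G (B i) (B j)"
    using assms(2) unfolding Kfam_def by blast
  have sub: "B i \<subseteq> fst G" if "i < r" for i
  proof -
    have "sat M (B i)" using B1 that by blast
    then have "B i \<subseteq> \<Union>M" by (rule sat_sub)
    moreover have "\<Union>M \<subseteq> fst G" using assms(1) unfolding model_def by blast
    ultimately show ?thesis by blast
  qed
  have C1: "\<forall>i<r. B i \<noteq> {} \<and> B i \<subseteq> fst G \<and> connected_graph (induced G (B i))"
  proof (intro allI impI)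
    fix i assume i: "i < r"
    then have "B i \<noteq> {} \<and> conn G (B i)" using B1 by simp
    then show "B i \<noteq> {} \<and> B i \<subseteq> fst G \<and> connected_graph (induced G (B i))"
      using sub[OF i] unfolding conn_def by simp
  qed
  have C3: "\<forall>i<r. \<forall>j<r. i \<noteq> j \<longrightarrow> (\<exists>x\<in>B i. \<exists>y\<in>B j. (x, y) \<in> snd G)"
    using B3 unfolding adjs_def by simp
  show ?thesis unfolding has_K_minor_def
    by (rule exI[of _ B]) (intro conjI C1 B2 C3)
qed

definition dgn :: "nat \<Rightarrow> 'b set \<Rightarrow> ('b \<times> 'b) set \<Rightarrow> bool" where
  "dgn d M E \<longleftrightarrow> (\<forall>S\<subseteq>M. S \<noteq> {} \<longrightarrow> (\<exists>A\<in>S. card (nb E A \<inter> S) < d))"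

lemma dgn_sub: "dgn d M E \<Longrightarrow> M' \<subseteq> M \<Longrightarrow> dgn d M' E"
  unfolding dgn_def by blast

lemma degen:
  assumes G: "is_graph G" and nk: "\<not> has_K_minor r G" and mo: "model G M" and me: "medges G M E"
  shows "dgn (2 * 4 ^ r) M E"
  unfolding dgn_def
proof (intro allI impI)
  fix S assume S: "S \<subseteq> M" "S \<noteq> {}"
  define ES where "ES = E \<inter> S \<times> S"
  have moS: "model G S" using mo S(1) by (rule model_sub)
  have meS: "medges G S ES" unfolding medges_def
  proof (intro conjI)
    show "ES \<subseteq> S \<times> S" unfolding ES_def by blast
    have "sym E" using me unfolding medges_def by blast
    then show "sym ES" unfolding ES_def by (rule sym_Int) (auto simp: sym_def)
    show "\<forall>A B. (A, B) \<in> ES \<longrightarrow> A \<noteq> B \<and> adjs G A B" using me unfolding medges_def ES_def by blast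
  qed
  have finS: "finite S" using G moS by (rule model_finite)
  have nbS: "nb ES A = nb E A \<inter> S" if "A \<in> S" for A using that unfolding ES_def nb_def by blast
  show "\<exists>A\<in>S. card (nb E A \<inter> S) < 2 * 4 ^ r"
  proof (rule ccontr)
    assume "\<not> ?thesis"
    then have ge: "2 * 4 ^ r \<le> card (nb ES A)" if "A \<in> S" for A using that nbS by force
    have "card ES = (\<Sum>A\<in>S. card (nb ES A))" using card_E_sum[of ES S] finS unfolding ES_def by blast
    also have "\<dots> \<ge> card S * (2 * 4 ^ r)"
      by (rule sum_bounded_below[where 'a=nat, simplified]) (rule ge)
    finally have "2 * 4 ^ r * card S \<le> card ES" by (simp add: mult.commute)
    then have "Kfam r G S" using mader[OF G moS meS S(2)] by blast
    then have "has_K_minor r G" using moS Kfam_minor by blast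
    then show False using nk by blast
  qed
qed

lemma coloring:
  assumes "finite M" "dgn d M E" "sym E" "\<forall>A. (A, A) \<notin> E"
  shows "\<exists>col. (\<forall>A\<in>M. col A < d) \<and> (\<forall>A\<in>M. \<forall>B\<in>M. (A, B) \<in> E \<longrightarrow> col A \<noteq> col B)"
  using assms(1,2)
proof (induction "card M" arbitrary: M rule: less_induct)
  case less
  show ?case
  proof (cases "M = {}")
    case True then show ?thesis by auto
  next
    case False
    then obtain A where A: "A \<in> M" "card (nb E A \<inter> M) < d" using less.prems unfolding dgn_def by blast
    define M' where "M' = M - {A}"
    have "card M' < card M" using A(1) less.prems(1) unfolding M'_def by (intro card_Diff1_less)
    moreover have "finite M'" using less.prems(1) by (simp add: M'_def)
    moreover have "dgn d M' E" by (rule dgn_sub[OF less.prems(2)]) (auto simp: M'_def)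
    ultimately obtain col where col1: "\<forall>B\<in>M'. col B < d"
      and col2: "\<forall>B\<in>M'. \<forall>C\<in>M'. (B, C) \<in> E \<longrightarrow> col B \<noteq> col C"
      using less.hyps by blast
    define used where "used = col ` (nb E A \<inter> M')"
    have "card used \<le> card (nb E A \<inter> M')" unfolding used_def by (rule card_image_le) (use \<open>finite M'\<close> in auto)
    also have "\<dots> \<le> card (nb E A \<inter> M)" using less.prems(1) unfolding M'_def by (intro card_mono) auto
    finally have "card used < d" using A(2) by linarith
    have fu: "finite used" unfolding used_def using \<open>finite M'\<close> by simp
    have "\<not> {..<d} \<subseteq> used"
    proof
      assume "{..<d} \<subseteq> used"
      then have "card {..<d} \<le> card used" by (rule card_mono[OF fu])
      then show False using \<open>card used < d\<close> by simp
    qed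
    then obtain c where c: "c < d" "c \<notin> used" by blast
    define col' where "col' = col(A := c)"
    have "\<forall>B\<in>M. col' B < d" using col1 c unfolding col'_def M'_def by auto
    moreover have "col' B \<noteq> col' C" if BCM: "B \<in> M" "C \<in> M" "(B, C) \<in> E" for B C
    proof -
      have BC: "B \<noteq> C" using BCM assms(4) by blast
      consider "B = A" | "C = A" | "B \<in> M'" "C \<in> M'" using BCM unfolding M'_def by blast
      then show ?thesis
      proof cases
        case 1
        then have "C \<in> nb E A \<inter> M'" using BCM BC unfolding nb_def M'_def by auto
        then show ?thesis using 1 BC c unfolding col'_def used_def by auto
      next
        case 2
        then have "(A, B) \<in> E" using symD[OF assms(3) BCM(3)] by simp
        then have "B \<in> nb E A \<inter> M'" using BCM BC 2 unfolding nb_def M'_def by auto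
        then show ?thesis using 2 BC c unfolding col'_def used_def by auto
      next
        case 3 then show ?thesis using col2 BCM unfolding col'_def M'_def by auto
      qed
    qed
    ultimately show ?thesis by blast
  qed
qed

lemma orientation:
  assumes "finite M" "dgn d M E" "sym E" "\<forall>A. (A, A) \<notin> E" "E \<subseteq> M \<times> M" "0 < d"
  shows "\<exists>Or\<subseteq>E. (\<forall>A B. (A, B) \<in> E \<longrightarrow> (A, B) \<in> Or \<or> (B, A) \<in> Or) \<and> (\<forall>A. card (nb Or A) < d)"
  using assms(1,2,5,3,4)
proof (induction "card M" arbitrary: M E rule: less_induct)
  case less
  show ?case
  proof (cases "M = {}")
    case True then show ?thesis using less.prems assms(6) by (intro exI[of _ "{}"]) (auto simp: nb_def)
  next
    case False
    then obtain A where A: "A \<in> M" "card (nb E A \<inter> M) < d" using less.prems(2) unfolding dgn_def by blast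
    define M' where "M' = M - {A}"
    define E' where "E' = E \<inter> M' \<times> M'"
    have "card M' < card M" using A(1) less.prems(1) unfolding M'_def by (intro card_Diff1_less)
    moreover have "finite M'" using less.prems(1) by (simp add: M'_def)
    moreover have "E' \<subseteq> M' \<times> M'" unfolding E'_def by blast
    moreover have "sym E'" unfolding E'_def using less.prems(4) by (rule sym_Int) (auto simp: sym_def)
    moreover have "\<forall>A. (A, A) \<notin> E'" unfolding E'_def using less.prems(5) by blast
    moreover have "dgn d M' E'" unfolding dgn_def
    proof (intro allI impI)
      fix S assume S: "S \<subseteq> M'" "S \<noteq> {}"
      then have "S \<subseteq> M" unfolding M'_def by blast
      then obtain B where B: "B \<in> S" "card (nb E B \<inter> S) < d" using S(2) less.prems(2) unfolding dgn_def by blast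
      have eq: "nb E' B \<inter> S = nb E B \<inter> S" using B(1) S(1) unfolding E'_def nb_def by blast
      show "\<exists>B\<in>S. card (nb E' B \<inter> S) < d" using B(1) by (rule bexI[rotated]) (simp add: eq B(2))
    qed
    ultimately have "\<exists>Or\<subseteq>E'. (\<forall>A B. (A, B) \<in> E' \<longrightarrow> (A, B) \<in> Or \<or> (B, A) \<in> Or) \<and> (\<forall>A. card (nb Or A) < d)"
      using less.hyps by presburger
    then obtain Or' where Or'1: "Or' \<subseteq> E'" and Or'2: "\<forall>B C. (B, C) \<in> E' \<longrightarrow> (B, C) \<in> Or' \<or> (C, B) \<in> Or'"
      and Or'3: "\<forall>B. card (nb Or' B) < d"
      by blast
    define Or where "Or = Or' \<union> {(A, B) | B. (A, B) \<in> E}"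
    have "Or \<subseteq> E" using Or'1 unfolding Or_def E'_def by auto
    moreover have "(B, C) \<in> Or \<or> (C, B) \<in> Or" if "(B, C) \<in> E" for B C
    proof (cases "B = A \<or> C = A")
      case True
      then show ?thesis using that symD[OF less.prems(4) that] unfolding Or_def by auto
    next
      case False
      then have "(B, C) \<in> E'" using that less.prems(3) unfolding E'_def M'_def by auto
      then show ?thesis using Or'2 unfolding Or_def by auto
    qed
    moreover have "card (nb Or B) < d" for B
    proof (cases "B = A")
      case True
      have "A \<notin> M'" unfolding M'_def by simp
      then have "nb Or A = nb E A \<inter> M"
        using Or'1 less.prems(3) unfolding Or_def E'_def nb_def by auto
      then show ?thesis using True A(2) by simp
    next
      case False
      then have "nb Or B = nb Or' B" unfolding Or_def nb_def by auto
      then show ?thesis using Or'3 by simp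
    qed
    ultimately show ?thesis by blast
  qed
qed





lemma bfs_tree_props:
  assumes "bfs_tree G (\<rho>, T)"
  shows "conn G (fst T)" "fst T \<subseteq> fst G" "\<rho> \<in> fst T" "fst T \<noteq> {}"
proof -
  have sg: "subgraph T G" and tr: "is_tree T" and r: "\<rho> \<in> fst T"
    using assms unfolding bfs_tree_def by auto
  have ig: "is_graph T" and cT: "connected_graph T" using tr unfolding is_tree_def by auto
  have "snd T \<subseteq> fst T \<times> fst T" using ig unfolding is_graph_def by simp
  then have "snd T \<subseteq> snd (induced G (fst T))" using sg unfolding subgraph_def by auto
  note sub = this
  have "reach (induced G (fst T)) u v" if uv: "u \<in> fst T" "v \<in> fst T" for u v
  proof -
    have "reach T u v" using cT uv unfolding connected_reach by blast
    moreover have "fst T \<subseteq> fst (induced G (fst T))" by simp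
    ultimately show ?thesis using sub by (rule reach_mono)
  qed
  then show "conn G (fst T)" unfolding conn_reach by simp
  show "fst T \<subseteq> fst G" using sg unfolding subgraph_def by simp
  show "\<rho> \<in> fst T" by (rule r)
  then show "fst T \<noteq> {}" by blast
qed

definition tr :: "'a graph \<Rightarrow> 'a \<Rightarrow> 'a set \<Rightarrow> 'a \<times> 'a graph" where
  "tr G \<rho> S = (\<rho>, SOME T. bfs_tree G (\<rho>, T) \<and> fst T = S)"

lemma tr_props:
  assumes "is_graph G" "S \<subseteq> fst G" "conn G S" "\<rho> \<in> S"
  shows "bfs_tree G (tr G \<rho> S)" "fst (snd (tr G \<rho> S)) = S" "fst (tr G \<rho> S) = \<rho>"
proof -
  have "bfs_tree G (\<rho>, SOME T. bfs_tree G (\<rho>, T) \<and> fst T = S) \<and> fst (SOME T. bfs_tree G (\<rho>, T) \<and> fst T = S) = S"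
    using bfs_exists[OF assms] by (rule someI_ex)
  then show "bfs_tree G (tr G \<rho> S)" "fst (snd (tr G \<rho> S)) = S" "fst (tr G \<rho> S) = \<rho>"
    unfolding tr_def by auto
qed

lemma forest_image:
  assumes "\<And>i. i \<in> I \<Longrightarrow> bfs_tree G (f i)"
    and "\<And>i j. i \<in> I \<Longrightarrow> j \<in> I \<Longrightarrow> i \<noteq> j \<Longrightarrow> fst (snd (f i)) \<inter> fst (snd (f j)) = {}"
  shows "bfs_forest G (f ` I)"
  unfolding bfs_forest_def
proof (intro conjI ballI impI)
  fix T assume "T \<in> f ` I" then show "bfs_tree G T" using assms(1) by blast
next
  fix T1 T2 assume "T1 \<in> f ` I" "T2 \<in> f ` I" "T1 \<noteq> T2"
  then obtain i j where ij: "i \<in> I" "j \<in> I" "T1 = f i" "T2 = f j" by blast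
  then have "i \<noteq> j" using \<open>T1 \<noteq> T2\<close> by blast
  then show "fst (snd T1) \<inter> fst (snd T2) = {}" using assms(2)[OF ij(1,2)] ij(3,4) by simp
qed





locale mainctx =
  fixes G :: "'a graph" and r :: nat and F :: "('a \<times> 'a graph) set"
  assumes G: "is_graph G" and nk: "\<not> has_K_minor r G" and BF: "bfs_forest G F"
begin

abbreviation "D \<equiv> 2 * 4 ^ r :: nat"

lemma D_pos: "0 < D" by simp

lemma symG: "sym (snd G)" using G by (simp add: is_graph_def)

definition part :: "'a \<times> 'a graph \<Rightarrow> 'a set" where "part T = fst (snd T)"

definition "parts = part ` F"

lemma F_tree: "T \<in> F \<Longrightarrow> bfs_tree G T"
  using BF unfolding bfs_forest_def by blast

lemma F_disj: "T1 \<in> F \<Longrightarrow> T2 \<in> F \<Longrightarrow> T1 \<noteq> T2 \<Longrightarrow> part T1 \<inter> part T2 = {}"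
  using BF unfolding bfs_forest_def part_def by blast

lemma part_props:
  assumes "T \<in> F"
  shows "conn G (part T)" "part T \<subseteq> fst G" "fst T \<in> part T" "part T \<noteq> {}"
proof -
  obtain \<rho> T' where T: "T = (\<rho>, T')" by (cases T)
  have "bfs_tree G (\<rho>, T')" using F_tree[OF assms] T by simp
  note b = bfs_tree_props[OF this]
  show "conn G (part T)" "part T \<subseteq> fst G" "fst T \<in> part T" "part T \<noteq> {}"
    using b T unfolding part_def by auto
qed

lemma part_inj: "T1 \<in> F \<Longrightarrow> T2 \<in> F \<Longrightarrow> part T1 = part T2 \<Longrightarrow> T1 = T2"
proof (rule ccontr)
  assume a: "T1 \<in> F" "T2 \<in> F" "part T1 = part T2" "T1 \<noteq> T2"
  then have "part T1 \<inter> part T2 = {}" by (intro F_disj)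
  then show False using a part_props(4)[OF a(1)] by simp
qed

definition "rt P = fst (THE T. T \<in> F \<and> part T = P)"

lemma rt_part: "T \<in> F \<Longrightarrow> rt (part T) = fst T"
proof -
  assume T: "T \<in> F"
  have "(THE T'. T' \<in> F \<and> part T' = part T) = T"
    using T part_inj by (intro the_equality) auto
  then show ?thesis unfolding rt_def by simp
qed

lemma parts_props:
  assumes "P \<in> parts"
  shows "conn G P" "P \<subseteq> fst G" "rt P \<in> P" "P \<noteq> {}"
proof -
  obtain T where T: "T \<in> F" "P = part T" using assms unfolding parts_def by blast
  show "conn G P" "P \<subseteq> fst G" "rt P \<in> P" "P \<noteq> {}"
    using part_props[OF T(1)] rt_part[OF T(1)] T(2) by auto
qed

lemma parts_disj: "P \<in> parts \<Longrightarrow> Q \<in> parts \<Longrightarrow> P \<noteq> Q \<Longrightarrow> P \<inter> Q = {}"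
  unfolding parts_def using F_disj by blast

lemma model_parts: "model G parts"
  unfolding model_def using parts_props parts_disj by blast

lemma adjs_sym: "adjs G A B \<Longrightarrow> adjs G B A"
  unfolding adjs_def using symG by (meson symD)

definition "EH = {(P, Q). P \<in> parts \<and> Q \<in> parts \<and> P \<noteq> Q \<and> adjs G P Q}"

lemma medges_EH: "medges G parts EH"
  unfolding medges_def
proof (intro conjI)
  show "EH \<subseteq> parts \<times> parts" unfolding EH_def by blast
  show "sym EH" unfolding EH_def sym_def using adjs_sym by blast
  show "\<forall>A B. (A, B) \<in> EH \<longrightarrow> A \<noteq> B \<and> adjs G A B" unfolding EH_def by blast
qed

lemma finite_parts: "finite parts" using G model_parts by (rule model_finite)

definition "col = (SOME col. (\<forall>A\<in>parts. col A < D) \<and> (\<forall>A\<in>parts. \<forall>B\<in>parts. (A, B) \<in> EH \<longrightarrow> col A \<noteq> col B))"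

lemma col: "\<forall>A\<in>parts. col A < D" "\<forall>A\<in>parts. \<forall>B\<in>parts. (A, B) \<in> EH \<longrightarrow> col A \<noteq> col B"
proof -
  have dg: "dgn D parts EH" using degen[OF G nk model_parts medges_EH] .
  have "sym EH" "\<forall>A. (A, A) \<notin> EH" using medges_EH unfolding medges_def by auto
  then have "\<exists>col. (\<forall>A\<in>parts. col A < D) \<and> (\<forall>A\<in>parts. \<forall>B\<in>parts. (A, B) \<in> EH \<longrightarrow> col A \<noteq> col B)"
    using coloring[OF finite_parts dg] by blast
  then have "(\<forall>A\<in>parts. col A < D) \<and> (\<forall>A\<in>parts. \<forall>B\<in>parts. (A, B) \<in> EH \<longrightarrow> col A \<noteq> col B)"
    unfolding col_def by (rule someI_ex)
  then show "\<forall>A\<in>parts. col A < D" "\<forall>A\<in>parts. \<forall>B\<in>parts. (A, B) \<in> EH \<longrightarrow> col A \<noteq> col B" by auto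
qed

definition "Kc c = {P \<in> parts. col P = c}"
definition "Xc c = fst G - \<Union>(Kc c)"
definition "Mc c = Kc c \<union> (\<lambda>x. {x}) ` Xc c"
definition "Ec0 c = {(P, {x}) | P x. P \<in> Kc c \<and> x \<in> Xc c \<and> adjs G P {x}}"
definition "Ec c = Ec0 c \<union> (Ec0 c)\<inverse>"

lemma Kc_parts: "Kc c \<subseteq> parts" unfolding Kc_def by blast

lemma Xc_notin: "x \<in> Xc c \<Longrightarrow> P \<in> Kc c \<Longrightarrow> x \<notin> P"
  unfolding Xc_def by blast

lemma model_Mc: "model G (Mc c)"
proof -
  have h1: "A \<noteq> {} \<and> A \<subseteq> fst G \<and> conn G A" if AM: "A \<in> Mc c" for A
  proof -
  from AM
  consider "A \<in> Kc c" | x where "x \<in> Xc c" "A = {x}" unfolding Mc_def by blast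
  then show "A \<noteq> {} \<and> A \<subseteq> fst G \<and> conn G A"
  proof cases
    case 1 then show ?thesis using parts_props Kc_parts by blast
  next
    case (2 x)
    have "conn G {x}" by (rule conn_single)
    then show ?thesis using 2 unfolding Xc_def by auto
  qed
  qed
  have h2: "A \<inter> B = {}" if A: "A \<in> Mc c" and B: "B \<in> Mc c" and AB: "A \<noteq> B" for A B
  proof -
    have cA: "A \<in> Kc c \<or> (\<exists>x. x \<in> Xc c \<and> A = {x})" using A unfolding Mc_def by blast
    have cB: "B \<in> Kc c \<or> (\<exists>x. x \<in> Xc c \<and> B = {x})" using B unfolding Mc_def by blast
    show ?thesis
    proof (cases "A \<in> Kc c")
      case True
      show ?thesis
      proof (cases "B \<in> Kc c")
        case True
        then show ?thesis using \<open>A \<in> Kc c\<close> AB parts_disj Kc_parts by blast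
      next
        case False
        then obtain y where "y \<in> Xc c" "B = {y}" using cB by blast
        then show ?thesis using \<open>A \<in> Kc c\<close> Xc_notin by blast
      qed
    next
      case False
      then obtain x where x: "x \<in> Xc c" "A = {x}" using cA by blast
      show ?thesis
      proof (cases "B \<in> Kc c")
        case True
        then show ?thesis using x Xc_notin by blast
      next
        case False
        then obtain y where "y \<in> Xc c" "B = {y}" using cB by blast
        then show ?thesis using x AB by blast
      qed
    qed
  qed
  show ?thesis unfolding model_def using h1 h2 by blast
qed

lemma Ec0_mem: "(A, B) \<in> Ec0 c \<longleftrightarrow> (\<exists>x. B = {x} \<and> A \<in> Kc c \<and> x \<in> Xc c \<and> adjs G A {x})"
  unfolding Ec0_def by blast

lemma medges_Ec: "medges G (Mc c) (Ec c)"
  unfolding medges_def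
proof (intro conjI)
  show "Ec c \<subseteq> Mc c \<times> Mc c" unfolding Ec_def Mc_def Ec0_def by blast
  show "sym (Ec c)" unfolding Ec_def by (rule sym_Un_converse)
  show "\<forall>A B. (A, B) \<in> Ec c \<longrightarrow> A \<noteq> B \<and> adjs G A B"
  proof (intro allI impI)
    fix A B assume "(A, B) \<in> Ec c"
    then have "(A, B) \<in> Ec0 c \<or> (B, A) \<in> Ec0 c" unfolding Ec_def by blast
    then show "A \<noteq> B \<and> adjs G A B"
    proof
      assume "(A, B) \<in> Ec0 c"
      then obtain x where x: "B = {x}" "A \<in> Kc c" "x \<in> Xc c" "adjs G A {x}" using Ec0_mem by blast
      then have "x \<notin> A" using Xc_notin by blast
      then show ?thesis using x by auto
    next
      assume "(B, A) \<in> Ec0 c"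
      then obtain x where x: "A = {x}" "B \<in> Kc c" "x \<in> Xc c" "adjs G B {x}" using Ec0_mem by blast
      then have "x \<notin> B" using Xc_notin by blast
      then show ?thesis using x adjs_sym by auto
    qed
  qed
qed

definition "Oc c = (SOME Or. Or \<subseteq> Ec c \<and> (\<forall>A B. (A, B) \<in> Ec c \<longrightarrow> (A, B) \<in> Or \<or> (B, A) \<in> Or) \<and> (\<forall>A. card (nb Or A) < D))"

lemma finite_Mc: "finite (Mc c)" using G model_Mc by (rule model_finite)

lemma Oc: "Oc c \<subseteq> Ec c" "\<And>A B. (A, B) \<in> Ec c \<Longrightarrow> (A, B) \<in> Oc c \<or> (B, A) \<in> Oc c" "\<And>A. card (nb (Oc c) A) < D"
proof -
  have dg: "dgn D (Mc c) (Ec c)" using degen[OF G nk model_Mc medges_Ec] .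
  have "sym (Ec c)" "\<forall>A. (A, A) \<notin> Ec c" "Ec c \<subseteq> Mc c \<times> Mc c" using medges_Ec unfolding medges_def by auto
  then have "\<exists>Or. Or \<subseteq> Ec c \<and> (\<forall>A B. (A, B) \<in> Ec c \<longrightarrow> (A, B) \<in> Or \<or> (B, A) \<in> Or) \<and> (\<forall>A. card (nb Or A) < D)"
    using orientation[OF finite_Mc dg _ _ _ D_pos] by blast
  then have "Oc c \<subseteq> Ec c \<and> (\<forall>A B. (A, B) \<in> Ec c \<longrightarrow> (A, B) \<in> Oc c \<or> (B, A) \<in> Oc c) \<and> (\<forall>A. card (nb (Oc c) A) < D)"
    unfolding Oc_def by (rule someI_ex)
  then show "Oc c \<subseteq> Ec c" "\<And>A B. (A, B) \<in> Ec c \<Longrightarrow> (A, B) \<in> Oc c \<or> (B, A) \<in> Oc c" "\<And>A. card (nb (Oc c) A) < D"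
    by auto
qed

lemma finite_nb_Oc: "finite (nb (Oc c) A)"
proof (rule finite_subset[OF _ finite_Mc])
  show "nb (Oc c) A \<subseteq> Mc c" using Oc(1) medges_Ec unfolding medges_def nb_def by blast
qed

definition "lab c A = (SOME h. bij_betw h (nb (Oc c) A) {0..<card (nb (Oc c) A)})"

lemma lab: "B \<in> nb (Oc c) A \<Longrightarrow> lab c A B < D" "inj_on (lab c A) (nb (Oc c) A)"
proof -
  have "\<exists>h. bij_betw h (nb (Oc c) A) {0..<card (nb (Oc c) A)}"
    using finite_nb_Oc by (rule ex_bij_betw_finite_nat)
  then have b: "bij_betw (lab c A) (nb (Oc c) A) {0..<card (nb (Oc c) A)}"
    unfolding lab_def by (rule someI_ex)
  then show "inj_on (lab c A) (nb (Oc c) A)" by (rule bij_betw_imp_inj_on)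
  assume "B \<in> nb (Oc c) A"
  then have "lab c A B < card (nb (Oc c) A)" using b bij_betwE by fastforce
  then show "lab c A B < D" using Oc(3)[of c A] by linarith
qed

end





context mainctx begin

definition "S1 c t x = {x} \<union> \<Union>{P \<in> Kc c. (P, {x}) \<in> Oc c \<and> lab c P {x} = t}"
definition "S2 c t P = P \<union> {x \<in> Xc c. ({x}, P) \<in> Oc c \<and> lab c {x} P = t}"

definition "F1 c t = (\<lambda>x. tr G x (S1 c t x)) ` Xc c"
definition "F2 c t = (\<lambda>P. tr G (rt P) (S2 c t P)) ` Kc c"

lemma Oc_Ec0: "(P, {x}) \<in> Oc c \<Longrightarrow> P \<in> Kc c \<Longrightarrow> adjs G P {x}"
proof -
  assume a: "(P, {x}) \<in> Oc c" "P \<in> Kc c"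
  then have "(P, {x}) \<in> Ec c" using Oc(1) by blast
  then show ?thesis using medges_Ec unfolding medges_def by blast
qed

lemma Oc_Ec1: "({x}, P) \<in> Oc c \<Longrightarrow> adjs G {x} P"
proof -
  assume a: "({x}, P) \<in> Oc c"
  then have "({x}, P) \<in> Ec c" using Oc(1) by blast
  then show ?thesis using medges_Ec unfolding medges_def by blast
qed

lemma S1_props:
  assumes "x \<in> Xc c"
  shows "S1 c t x \<subseteq> fst G" "conn G (S1 c t x)" "x \<in> S1 c t x"
proof -
  let ?K = "{P \<in> Kc c. (P, {x}) \<in> Oc c \<and> lab c P {x} = t}"
  have xV: "x \<in> fst G" using assms unfolding Xc_def by blast
  have "\<Union>?K \<subseteq> fst G" using parts_props(2) Kc_parts by blast
  then show "S1 c t x \<subseteq> fst G" using xV unfolding S1_def by blast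
  show "x \<in> S1 c t x" unfolding S1_def by blast
  have K: "conn G P \<and> (\<exists>a\<in>{x}. \<exists>b\<in>P. (a, b) \<in> snd G)" if P: "P \<in> ?K" for P
  proof -
    have "P \<in> parts" using P Kc_parts by blast
    then have "conn G P" by (rule parts_props)
    moreover have "adjs G P {x}" using P Oc_Ec0 by blast
    then have "adjs G {x} P" by (rule adjs_sym)
    ultimately show ?thesis unfolding adjs_def by blast
  qed
  have "conn G ({x} \<union> \<Union>?K)" by (rule conn_union_star[OF symG conn_single _ K]) auto
  then show "conn G (S1 c t x)" unfolding S1_def .
qed

lemma S2_props:
  assumes "P \<in> Kc c"
  shows "S2 c t P \<subseteq> fst G" "conn G (S2 c t P)" "rt P \<in> S2 c t P" "P \<subseteq> S2 c t P"
proof -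
  let ?X = "{x \<in> Xc c. ({x}, P) \<in> Oc c \<and> lab c {x} P = t}"
  have Pp: "P \<in> parts" using assms Kc_parts by blast
  have "?X \<subseteq> fst G" unfolding Xc_def by blast
  then show "S2 c t P \<subseteq> fst G" using parts_props(2)[OF Pp] unfolding S2_def by blast
  show "rt P \<in> S2 c t P" using parts_props(3)[OF Pp] unfolding S2_def by blast
  show "P \<subseteq> S2 c t P" unfolding S2_def by blast
  let ?K = "(\<lambda>x. {x}) ` ?X"
  have K: "conn G Q \<and> (\<exists>a\<in>P. \<exists>b\<in>Q. (a, b) \<in> snd G)" if Q: "Q \<in> ?K" for Q
  proof -
    obtain x where x: "x \<in> ?X" "Q = {x}" using Q by blast
    have "adjs G {x} P" using x Oc_Ec1 by blast
    then have "adjs G P {x}" by (rule adjs_sym)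
    moreover have "conn G {x}" by (rule conn_single)
    ultimately show ?thesis using x(2) unfolding adjs_def by simp
  qed
  have "conn G (P \<union> \<Union>?K)"
    by (rule conn_union_star[OF symG parts_props(1)[OF Pp] parts_props(3)[OF Pp] K])
  moreover have "\<Union>?K = ?X" by blast
  ultimately show "conn G (S2 c t P)" unfolding S2_def by simp
qed

lemma F1_forest: "bfs_forest G (F1 c t)"
  unfolding F1_def
proof (rule forest_image)
  fix x assume "x \<in> Xc c"
  note s = S1_props[OF this, of t]
  show "bfs_tree G (tr G x (S1 c t x))" using tr_props(1)[OF G s(1,2,3)] .
next
  fix x y assume x: "x \<in> Xc c" and y: "y \<in> Xc c" and xy: "x \<noteq> y"
  note sx = S1_props[OF x, of t] and sy = S1_props[OF y, of t]
  have e: "fst (snd (tr G x (S1 c t x))) = S1 c t x" "fst (snd (tr G y (S1 c t y))) = S1 c t y"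
    using tr_props(2)[OF G sx(1,2,3)] tr_props(2)[OF G sy(1,2,3)] by auto
  have "S1 c t x \<inter> S1 c t y = {}"
  proof (rule ccontr)
    assume "S1 c t x \<inter> S1 c t y \<noteq> {}"
    then obtain a where a: "a \<in> S1 c t x" "a \<in> S1 c t y" by blast
    show False
    proof (cases "a = x")
      case True
      then have "a \<noteq> y" using xy by simp
      then obtain Q where "Q \<in> Kc c" "a \<in> Q" using a(2) unfolding S1_def by blast
      then show False using True x Xc_notin by blast
    next
      case False
      then obtain P where P: "P \<in> Kc c" "(P, {x}) \<in> Oc c" "lab c P {x} = t" "a \<in> P"
        using a(1) unfolding S1_def by blast
      have "a \<noteq> y" using P(1,4) y Xc_notin by blast
      then obtain Q where Q: "Q \<in> Kc c" "(Q, {y}) \<in> Oc c" "lab c Q {y} = t" "a \<in> Q"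
        using a(2) unfolding S1_def by blast
      have "P = Q"
      proof (rule ccontr)
        assume "P \<noteq> Q"
        then have "P \<inter> Q = {}" using P(1) Q(1) Kc_parts parts_disj by blast
        then show False using P(4) Q(4) by blast
      qed
      then have "{x} \<in> nb (Oc c) P" "{y} \<in> nb (Oc c) P" using P Q unfolding nb_def by auto
      moreover have "lab c P {x} = lab c P {y}" using P(3) Q(3) \<open>P = Q\<close> by simp
      ultimately have "{x} = {y}" using lab(2)[of c P] by (meson inj_onD)
      then show False using xy by simp
    qed
  qed
  then show "fst (snd (tr G x (S1 c t x))) \<inter> fst (snd (tr G y (S1 c t y))) = {}" using e by simp
qed

lemma F2_forest: "bfs_forest G (F2 c t)"
  unfolding F2_def
proof (rule forest_image)
  fix P assume "P \<in> Kc c"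
  note s = S2_props[OF this, of t]
  show "bfs_tree G (tr G (rt P) (S2 c t P))" using tr_props(1)[OF G s(1,2,3)] .
next
  fix P Q assume P: "P \<in> Kc c" and Q: "Q \<in> Kc c" and PQ: "P \<noteq> Q"
  note sP = S2_props[OF P, of t] and sQ = S2_props[OF Q, of t]
  have e: "fst (snd (tr G (rt P) (S2 c t P))) = S2 c t P" "fst (snd (tr G (rt Q) (S2 c t Q))) = S2 c t Q"
    using tr_props(2)[OF G sP(1,2,3)] tr_props(2)[OF G sQ(1,2,3)] by auto
  have PQd: "P \<inter> Q = {}" using P Q PQ Kc_parts parts_disj by blast
  have "S2 c t P \<inter> S2 c t Q = {}"
  proof (rule ccontr)
    assume "S2 c t P \<inter> S2 c t Q \<noteq> {}"
    then obtain a where a: "a \<in> S2 c t P" "a \<in> S2 c t Q" by blast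
    show False
    proof (cases "a \<in> P")
      case True
      then have "a \<notin> Q" using PQd by blast
      then have "a \<in> Xc c" using a(2) unfolding S2_def by blast
      then show False using True P Xc_notin by blast
    next
      case False
      then have ax: "a \<in> Xc c" "({a}, P) \<in> Oc c" "lab c {a} P = t" using a(1) unfolding S2_def by auto
      then have "a \<notin> Q" using Q Xc_notin by blast
      then have ay: "({a}, Q) \<in> Oc c" "lab c {a} Q = t" using a(2) unfolding S2_def by auto
      have "P \<in> nb (Oc c) {a}" "Q \<in> nb (Oc c) {a}" using ax ay unfolding nb_def by auto
      moreover have "lab c {a} P = lab c {a} Q" using ax ay by simp
      ultimately have "P = Q" using lab(2)[of c "{a}"] by (meson inj_onD)
      then show False using PQ by simp
    qed
  qed
  then show "fst (snd (tr G (rt P) (S2 c t P))) \<inter> fst (snd (tr G (rt Q) (S2 c t Q))) = {}" using e by simp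
qed

end





context mainctx begin

definition "FS = insert F ((\<lambda>(c, t). F1 c t) ` ({..<D} \<times> {..<D}) \<union> (\<lambda>(c, t). F2 c t) ` ({..<D} \<times> {..<D}))"

lemma FS_forests: "F' \<in> FS \<Longrightarrow> bfs_forest G F'"
  unfolding FS_def using BF F1_forest F2_forest by auto

lemma FS_card: "finite FS" "card FS \<le> 1 + 2 * D * D"
proof -
  let ?A = "(\<lambda>(c, t). F1 c t) ` ({..<D} \<times> {..<D})"
  let ?B = "(\<lambda>(c, t). F2 c t) ` ({..<D} \<times> {..<D})"
  have fA: "finite ?A" and fB: "finite ?B" by auto
  then show "finite FS" unfolding FS_def by simp
  have cA: "card ?A \<le> D * D" using card_image_le[of "{..<D} \<times> {..<D}" "\<lambda>(c, t). F1 c t"] by simp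
  have cB: "card ?B \<le> D * D" using card_image_le[of "{..<D} \<times> {..<D}" "\<lambda>(c, t). F2 c t"] by simp
  have "card FS \<le> Suc (card (?A \<union> ?B))" unfolding FS_def using fA fB by (simp add: card_insert_if)
  also have "card (?A \<union> ?B) \<le> card ?A + card ?B" by (rule card_Un_le)
  finally show "card FS \<le> 1 + 2 * D * D" using cA cB by linarith
qed

lemma cover:
  assumes T: "T \<in> F" and gp: "gpath G p" and pr: "preserves T (butlast p)"
  shows "\<exists>T'\<in>\<Union>FS. preserves T' p"
proof -
  define P where "P = part T"
  define \<rho> where "\<rho> = fst T"
  have bpP: "set (butlast p) \<subseteq> P" and rb: "\<rho> \<in> set (butlast p)"
    using pr unfolding preserves_def P_def part_def \<rho>_def by auto
  have w: "walk G p" using gp unfolding gpath_def by simp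
  then have pne: "p \<noteq> []" unfolding walk_def by simp
  have bne: "butlast p \<noteq> []" using rb by auto
  define x where "x = last p"
  have peq: "p = butlast p @ [x]" unfolding x_def using pne by simp
  have setp: "set p = set (butlast p) \<union> {x}" by (subst peq) simp
  have TFS: "T \<in> \<Union>FS" using T unfolding FS_def by blast
  show ?thesis
  proof (cases "x \<in> P")
    case True
    have "preserves T p" unfolding preserves_def using setp bpP True rb
      unfolding P_def part_def \<rho>_def by auto
    then show ?thesis using TFS by blast
  next
    case False
    define u where "u = last (butlast p)"
    have uP: "u \<in> P" using bpP bne unfolding u_def by auto
    have "successively (\<lambda>x y. (x, y) \<in> snd G) (butlast p @ [x])"
      using w peq unfolding walk_def by metis
    then have ux: "(u, x) \<in> snd G" using bne unfolding u_def by (simp add: successively_append_iff)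
    have xV: "x \<in> fst G" using w pne unfolding walk_def x_def by auto
    have Pp: "P \<in> parts" unfolding parts_def P_def using T by blast
    define c where "c = col P"
    have cD: "c < D" using col(1) Pp unfolding c_def by blast
    have PK: "P \<in> Kc c" unfolding Kc_def c_def using Pp by simp
    have adjPx: "adjs G P {x}" unfolding adjs_def using uP ux by blast
    have xX: "x \<in> Xc c"
    proof -
      have "x \<notin> Q" if Q: "Q \<in> Kc c" for Q
      proof
        assume xQ: "x \<in> Q"
        then have "Q \<noteq> P" using False by blast
        moreover have "Q \<in> parts" using Q Kc_parts by blast
        moreover have "adjs G P Q" using uP xQ ux unfolding adjs_def by blast
        ultimately have "(P, Q) \<in> EH" using Pp unfolding EH_def by blast
        then have "col P \<noteq> col Q" using col(2) Pp \<open>Q \<in> parts\<close> by blast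
        then show False using Q PK unfolding Kc_def by simp
      qed
      then show ?thesis unfolding Xc_def using xV by blast
    qed
    have "(P, {x}) \<in> Ec c" unfolding Ec_def Ec0_def using PK xX adjPx by blast
    then have "(P, {x}) \<in> Oc c \<or> ({x}, P) \<in> Oc c" by (rule Oc(2))
    then show ?thesis
    proof
      assume o: "(P, {x}) \<in> Oc c"
      define t where "t = lab c P {x}"
      have tD: "t < D" unfolding t_def using o by (intro lab(1)) (simp add: nb_def)
      define T' where "T' = tr G x (S1 c t x)"
      note s = S1_props[OF xX, of t]
      have T'1: "T' \<in> F1 c t" unfolding F1_def T'_def using xX by blast
      have "F1 c t \<in> FS" unfolding FS_def using cD tD by blast
      then have T'FS: "T' \<in> \<Union>FS" using T'1 by blast
      have "P \<subseteq> S1 c t x" unfolding S1_def using PK o t_def by blast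
      moreover have "x \<in> S1 c t x" by (rule s(3))
      ultimately have "set p \<subseteq> fst (snd T')" using setp bpP tr_props(2)[OF G s] unfolding T'_def by auto
      moreover have "fst T' \<in> set p" using tr_props(3)[OF G s] setp unfolding T'_def by simp
      ultimately show ?thesis using T'FS unfolding preserves_def by blast
    next
      assume o: "({x}, P) \<in> Oc c"
      define t where "t = lab c {x} P"
      have tD: "t < D" unfolding t_def using o by (intro lab(1)) (simp add: nb_def)
      define T' where "T' = tr G (rt P) (S2 c t P)"
      note s = S2_props[OF PK, of t]
      have T'1: "T' \<in> F2 c t" unfolding F2_def T'_def using PK by blast
      have "F2 c t \<in> FS" unfolding FS_def using cD tD by blast
      then have T'FS: "T' \<in> \<Union>FS" using T'1 by blast
      have "x \<in> S2 c t P" unfolding S2_def using xX o t_def by blast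
      then have "set p \<subseteq> fst (snd T')" using setp bpP s(4) tr_props(2)[OF G s(1,2,3)] unfolding T'_def by auto
      moreover have "rt P = \<rho>" unfolding P_def \<rho>_def using rt_part[OF T] .
      then have "fst T' \<in> set p" using tr_props(3)[OF G s(1,2,3)] setp rb unfolding T'_def by simp
      ultimately show ?thesis using T'FS unfolding preserves_def by blast
    qed
  qed
qed

lemma main: "root_expansion_forest G F FS"
  unfolding root_expansion_forest_def root_expansion_tree_def
proof (intro conjI ballI allI impI)
  fix F' assume "F' \<in> FS" then show "bfs_forest G F'" by (rule FS_forests)
next
  fix T T' assume "T' \<in> \<Union>FS"
  then obtain F' where "F' \<in> FS" "T' \<in> F'" by blast
  then show "bfs_tree G T'" using FS_forests unfolding bfs_forest_def by blast
next
  fix T p assume "T \<in> F" "gpath G p \<and> preserves T (butlast p)"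
  then show "\<exists>T'\<in>\<Union>FS. preserves T' p" using cover by blast
qed

end

theorem lemma2p2:
  fixes r :: nat
  shows "\<exists>c :: nat. \<forall>(G :: 'a graph) F.
           is_graph G \<and> \<not> has_K_minor r G \<and> bfs_forest G F \<longrightarrow>
           (\<exists>FS. root_expansion_forest G F FS \<and> finite FS \<and> card FS \<le> c)"
proof (intro exI[of _ "1 + 2 * (2 * 4 ^ r) * (2 * 4 ^ r)"] allI impI)
  fix G :: "'a graph" and F
  assume "is_graph G \<and> \<not> has_K_minor r G \<and> bfs_forest G F"
  then interpret mainctx G r F by unfold_locales auto
  show "\<exists>FS. root_expansion_forest G F FS \<and> finite FS \<and> card FS \<le> 1 + 2 * (2 * 4 ^ r) * (2 * 4 ^ r)"
    using main FS_card by blast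
qed



end
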